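(* Let $0<\lambda_l<\lambda_u$ and let $n=T_{k+1}-T_k\ge 1$ be an integer. For $\eta=(\eta_{T_k+1},\dots,\eta_{T_{k+1}})\in\mathbb{R}^n$ define $$F(\eta)=\max_{\lambda\in[\lambda_l,\lambda_u]}\ \prod_{t=T_k+1}^{T_{k+1}}\Bigl[1-\Bigl(\bigl(\tfrac{1}{\lambda_l}-\tfrac{1}{\lambda_u}\bigr)\eta_t+\tfrac{1}{\lambda_u}\Bigr)\lambda\Bigr]^2 .$$ Set $\varphi=2\lambda_u/\lambda_l$, $\eta_{\max}=1$, $\eta_{\min}=0$. Then the UBA learning rates $$\eta^*_t=\frac{2\bigl(1+\cos\theta_t\bigr)}{2\varphi+(2-\varphi)\bigl(1+\cos\theta_t\bigr)},\qquad \theta_t=\frac{(2(t-T_k)-1)\pi}{2(T_{k+1}-T_k)},\quad t=T_k+1,\dots,T_{k+1},$$ (equivalently $\eta^*_t=\frac{1+\cos\theta_t}{2\kappa-(\kappa-1)(1+\cos\theta_t)}$ with $\kappa=\lambda_u/\lambda_l$) satisfy $\eta^*\in[0,1]^n$ and $F(\eta^* )=\min_{\eta\in\mathbb{R}^n}F(\eta)$, i.e. $\eta^*$ is an exact minimizer of this min-max problem.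
   Context: This is the "UBA schedule" $\eta_t=(\eta_{\max}-\eta_{\min})\frac{2(1+\cos\theta_t)}{2\varphi+(2-\varphi)(1+\cos\theta_t)}+\eta_{\min}$ on the phase $t\in\{T_k+1,\dots,T_{k+1}\}$, specialized to $\eta_{\max}=1,\eta_{\min}=0$. The quantity inside the objective is a polynomial in $\lambda$ of degree at most $n$ taking the value $1$ at $\lambda=0$. *)

theory Defs
  imports "HOL-Analysis.Analysis"
begin

text \<open>Objective of the min-max problem on the phase t = Tk+1, ..., Tk1.
  The maximum over the compact interval [lam_l, lam_u] of a continuous function is
  written as a supremum (it is attained).\<close>
definition uba_F :: "real \<Rightarrow> real \<Rightarrow> nat \<Rightarrow> nat \<Rightarrow> (nat \<Rightarrow> real) \<Rightarrow> real" where
  "uba_F lam_l lam_u Tk Tk1 eta =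
     (SUP lam\<in>{lam_l..lam_u}.
        (\<Prod>t\<in>{Tk+1..Tk1}. (1 - ((1/lam_l - 1/lam_u) * eta t + 1/lam_u) * lam)^2))"

definition uba_theta :: "nat \<Rightarrow> nat \<Rightarrow> nat \<Rightarrow> real" where
  "uba_theta Tk Tk1 t = (2 * (real t - real Tk) - 1) * pi / (2 * (real Tk1 - real Tk))"

definition uba_eta :: "real \<Rightarrow> real \<Rightarrow> nat \<Rightarrow> nat \<Rightarrow> nat \<Rightarrow> real" where
  "uba_eta lam_l lam_u Tk Tk1 t =
     (let phi = 2 * lam_u / lam_l; c = 1 + cos (uba_theta Tk Tk1 t)
      in 2 * c / (2 * phi + (2 - phi) * c))"

end

theory Submission
  imports Defs "HOL-Computational_Algebra.Polynomial"
begin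

fun cheb :: "nat \<Rightarrow> real poly" where
  "cheb 0 = 1"
| "cheb (Suc 0) = [:0,1:]"
| "cheb (Suc (Suc n)) = pCons 0 (smult 2 (cheb (Suc n))) - cheb n"

lemma cheb_cos: "poly (cheb n) (cos x) = cos (real n * x)"
proof (induction n rule: cheb.induct)
  case (3 n)
  have "cos (real (Suc (Suc n)) * x) = cos ((real n + 1) * x + x)" by (simp add: algebra_simps)
  also have "\<dots> = 2 * cos x * cos ((real n + 1) * x) - cos ((real n + 1) * x - x)"
    unfolding cos_add cos_diff by (simp add: algebra_simps)
  also have "(real n + 1) * x - x = real n * x" by (simp add: algebra_simps)
  finally show ?case using 3 by (simp add: algebra_simps)
qed auto

lemma cheb_coeff: "(\<forall>k>n. coeff (cheb n) k = 0) \<and> coeff (cheb n) n = (if n = 0 then 1 else 2^(n-1))"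
proof (induction n rule: cheb.induct)
  case (3 n)
  show ?case
  proof (intro conjI allI impI)
    fix k assume "k > Suc (Suc n)"
    then obtain j where "k = Suc j" "j > Suc n" by (cases k) auto
    then show "coeff (cheb (Suc (Suc n))) k = 0" using 3 by auto
  next
    show "coeff (cheb (Suc (Suc n))) (Suc (Suc n)) = (if Suc (Suc n) = 0 then 1 else 2 ^ (Suc (Suc n) - 1))"
      using 3 by auto
  qed
qed (auto simp: coeff_pCons split: nat.splits)

lemma cheb_prod:
  fixes I :: "'a set" and c :: "'a \<Rightarrow> real"
  assumes fin: "finite I" and cI: "card I = n" and n1: "n \<ge> 1" and inj: "inj_on c I"
    and rt: "\<forall>t\<in>I. poly (cheb n) (c t) = 0"
  shows "2^(n-1) * (\<Prod>t\<in>I. (x - c t)) = poly (cheb n) x"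
proof -
  define P where "P = (\<Prod>t\<in>I. [:- c t, 1:])"
  define D where "D = cheb n - smult (2^(n-1)) P"
  have dP: "degree P = n" unfolding P_def using cI
    by (subst degree_prod_eq_sum_degree) auto
  have lP: "lead_coeff P = 1" unfolding P_def by (simp add: lead_coeff_prod)
  have cD: "coeff D k = 0" if "k \<ge> n" for k
  proof (cases "k = n")
    case True
    then show ?thesis using dP lP n1 cheb_coeff[of n] by (simp add: D_def)
  next
    case False
    then have "k > n" using that by auto
    then show ?thesis using dP cheb_coeff[of n] coeff_eq_0[of P k] by (simp add: D_def)
  qed
  have pD: "poly D x = poly (cheb n) x - 2^(n-1) * (\<Prod>t\<in>I. (x - c t))" for x
    by (simp add: D_def P_def poly_prod)
  have "D = 0"
  proof (rule ccontr)
    assume D0: "D \<noteq> 0"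
    have "coeff D (degree D) \<noteq> 0" using D0 by simp
    then have dD: "degree D < n" using cD by (meson not_le)
    have "c ` I \<subseteq> {x. poly D x = 0}"
      using rt fin by (auto simp: pD)
    then have "card (c ` I) \<le> card {x. poly D x = 0}"
      using poly_roots_finite[OF D0] by (intro card_mono) auto
    also have "\<dots> \<le> degree D" by (rule card_poly_roots_bound[OF D0])
    finally show False using card_image[OF inj] cI dD by simp
  qed
  then show ?thesis using pD[of x] by simp
qed


lemma ivt_sign:
  fixes f :: "real \<Rightarrow> real"
  assumes "a \<le> b" "continuous_on {a..b} f" "f a * f b < 0"
  shows "\<exists>z. a < z \<and> z < b \<and> f z = 0"
proof (cases "f a < 0")
  case True
  then have "f b > 0" using assms(3) by (smt (verit) mult_nonneg_nonpos mult_nonpos_nonpos)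
  then obtain z where "a \<le> z" "z \<le> b" "f z = 0" using IVT'[of f a 0 b] assms True by force
  then show ?thesis using True \<open>f b > 0\<close> by (intro exI[of _ z]) (auto simp: order.order_iff_strict)
next
  case False
  then have "f a > 0" "f b < 0" using assms(3) by (auto simp: mult_less_0_iff)
  then obtain z where "a \<le> z" "z \<le> b" "f z = 0" using IVT2'[of f b 0 a] assms by force
  then show ?thesis using \<open>f a > 0\<close> \<open>f b < 0\<close> by (intro exI[of _ z]) (auto simp: order.order_iff_strict)
qed

lemma F_poly:
  "uba_F l u Tk Tk1 eta = (SUP lam\<in>{l..u}. (poly (\<Prod>t\<in>{Tk+1..Tk1}. [:1, - ((1/l - 1/u) * eta t + 1/u):]) lam)^2)"
  unfolding uba_F_def poly_prod prod_power_distrib by (simp add: algebra_simps)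

lemma bdd_poly: "bdd_above ((\<lambda>x. (poly p x)^2) ` {l..u::real})"
proof -
  have "compact ((\<lambda>x. (poly p x)^2) ` {l..u::real})"
    by (intro compact_continuous_image continuous_intros) auto
  then show ?thesis by (intro bounded_imp_bdd_above compact_imp_bounded)
qed


theorem proposition1:
  fixes lam_l lam_u :: real and Tk Tk1 :: nat
  assumes "0 < lam_l" and "lam_l < lam_u" and "Tk1 - Tk \<ge> 1"
  shows "(\<forall>t\<in>{Tk+1..Tk1}. uba_eta lam_l lam_u Tk Tk1 t \<in> {0..1})
       \<and> (\<forall>eta :: nat \<Rightarrow> real.
            uba_F lam_l lam_u Tk Tk1 (uba_eta lam_l lam_u Tk Tk1) \<le> uba_F lam_l lam_u Tk Tk1 eta)"
proof -
  define l where "l = lam_l"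
  define u where "u = lam_u"
  define n where "n = Tk1 - Tk"
  define I where "I = {Tk+1..Tk1}"
  define m where "m = (u + l) / 2"
  define h where "h = (u - l) / 2"
  define th where "th = uba_theta Tk Tk1"
  define c where "c = (\<lambda>t. cos (th t))"
  define lam where "lam = (\<lambda>t. m - h * c t)"
  define es where "es = uba_eta lam_l lam_u Tk Tk1"
  define a where "a = (\<lambda>(eta::nat\<Rightarrow>real) (t::nat). (1/l - 1/u) * eta t + 1/u)"
  define G where "G = (\<lambda>eta. \<Prod>t\<in>I. [:1, - a eta t:])"
  have l0: "0 < l" and lu: "l < u" using assms by (auto simp: l_def u_def)
  have n1: "n \<ge> 1" using assms by (simp add: n_def)
  have rn: "real n = real Tk1 - real Tk" using n1 by (simp add: n_def of_nat_diff)
  have fin: "finite I" and cI: "card I = n" by (auto simp: I_def n_def)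
  have h0: "h > 0" using lu by (simp add: h_def)
  have F: "uba_F lam_l lam_u Tk Tk1 eta = (SUP x\<in>{l..u}. (poly (G eta) x)^2)" for eta
    unfolding F_poly G_def a_def I_def l_def u_def by simp
  have thI: "th t = (2 * real (t - Tk) - 1) * pi / (2 * real n)" if "t \<in> I" for t
    using that by (simp add: th_def uba_theta_def rn I_def of_nat_diff)
  have th_rng: "0 < th t \<and> th t < pi" if "t \<in> I" for t
  proof -
    have "1 \<le> real (t - Tk)" "real (t - Tk) \<le> real n" using that by (auto simp: I_def n_def)
    then have "0 < (2 * real (t - Tk) - 1) / (2 * real n)" "(2 * real (t - Tk) - 1) / (2 * real n) < 1"
      using n1 by (auto simp: field_simps)
    moreover have "th t = pi * ((2 * real (t - Tk) - 1) / (2 * real n))" by (simp add: thI[OF that])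
    moreover have "\<And>q. 0 < q \<Longrightarrow> q < 1 \<Longrightarrow> 0 < pi * q \<and> pi * q < pi"
      using pi_gt_zero mult_strict_left_mono[of _ 1 pi] by auto
    ultimately show ?thesis by metis
  qed
  have c_rng: "-1 \<le> c t \<and> c t \<le> 1" for t by (simp add: c_def)
  define phi where "phi = 2 * u / l"
  have phi2: "phi > 2" using l0 lu by (simp add: phi_def field_simps)
  have es_eq: "es t = 2 * (1 + c t) / (2 * phi + (2 - phi) * (1 + c t))" for t
    by (simp add: es_def uba_eta_def Let_def c_def th_def phi_def l_def u_def)
  have den: "2 * phi + (2 - phi) * (1 + c t) \<ge> 4" for t
  proof -
    have "(phi - 2) * (1 + c t) \<le> (phi - 2) * 2" using phi2 c_rng[of t] by (intro mult_left_mono) auto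
    then show ?thesis by (simp add: algebra_simps)
  qed
  have part1: "es t \<in> {0..1}" for t
  proof -
    have d: "2 * phi + (2 - phi) * (1 + c t) > 0" using den[of t] by linarith
    have "0 \<le> 2 * (1 + c t)" using c_rng[of t] by simp
    moreover have "2 * (1 + c t) \<le> 2 * phi + (2 - phi) * (1 + c t)"
    proof -
      have "phi * (1 + c t) \<le> phi * 2" using phi2 c_rng[of t] by (intro mult_left_mono) auto
      then show ?thesis by (simp add: algebra_simps)
    qed
    ultimately show ?thesis using d by (simp add: es_eq)
  qed
  have lam_pos: "lam t \<ge> l" for t
  proof -
    have "h * c t \<le> h" using h0 c_rng[of t] by (simp add: mult_left_le)
    moreover have "lam t = l + h - h * c t" by (simp add: lam_def m_def h_def field_simps)
    ultimately show ?thesis by linarith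
  qed
  have a_es: "a es t * lam t = 1" for t
  proof -
    have d: "2 * phi + (2 - phi) * (1 + c t) \<noteq> 0" using den[of t] by linarith
    define E where "E = 2 * u - (u - l) * (1 + c t)"
    have "(u - l) * (1 + c t) \<le> (u - l) * 2" using lu c_rng[of t] by (intro mult_left_mono) auto
    then have E0: "E > 0" using l0 by (simp add: E_def algebra_simps)
    have dd: "2 * phi + (2 - phi) * (1 + c t) = 2 * E / l"
      using l0 by (simp add: phi_def E_def field_simps)
    have "es t = 2 * (1 + c t) / (2 * E / l)" by (simp only: es_eq dd)
    then have e1: "es t = l * (1 + c t) / E" using l0 E0 by (simp add: field_simps)
    have e2: "a es t = 2 / E" using l0 lu E0 unfolding a_def e1
      by (simp add: field_simps) (simp add: E_def algebra_simps)
    have e3: "lam t = E / 2" by (simp add: lam_def m_def h_def E_def field_simps)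
    show ?thesis using E0 by (simp add: e2 e3)
  qed
  define Lam where "Lam = (\<Prod>t\<in>I. lam t)"
  have Lam0: "Lam > 0" unfolding Lam_def using lam_pos l0 by (intro prod_pos) (auto intro: less_le_trans)
  define K where "K = h ^ n / (Lam * 2 ^ (n - 1))"
  have K0: "K > 0" using h0 Lam0 by (simp add: K_def)
  have roots: "\<forall>t\<in>I. poly (cheb n) (c t) = 0"
  proof
    fix t assume t: "t \<in> I"
    have "real n * th t = of_int (2 * int (t - Tk) - 1) * (pi / 2)"
      using n1 by (simp add: thI[OF t] field_simps)
    moreover have "odd (2 * int (t - Tk) - 1)" by simp
    ultimately show "poly (cheb n) (c t) = 0" unfolding c_def cheb_cos cos_zero_iff_int by blast
  qed
  have inj: "inj_on c I"
  proof (rule inj_onI)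
    fix s t assume s: "s \<in> I" and t: "t \<in> I" and eq: "c s = c t"
    have "th s = th t"
      using cos_inj_pi[of "th s" "th t"] th_rng[OF s] th_rng[OF t] eq unfolding c_def by linarith
    then have "real (s - Tk) = real (t - Tk)" using n1 by (simp add: thI[OF s] thI[OF t] field_simps)
    then show "s = t" using s t by (simp add: I_def) arith
  qed
  have Ges: "poly (G es) x = K * poly (cheb n) ((m - x) / h)" for x
  proof -
    have "poly (G es) x = (\<Prod>t\<in>I. h * ((m - x) / h - c t) / lam t)"
      unfolding G_def poly_prod
    proof (intro prod.cong refl)
      fix t
      have "lam t > 0" using lam_pos[of t] l0 by linarith
      then have "a es t = 1 / lam t" using a_es[of t] by (simp add: field_simps)
      then show "poly [:1, - a es t:] x = h * ((m - x) / h - c t) / lam t"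
        using h0 \<open>lam t > 0\<close> by (simp add: field_simps lam_def)
    qed
    also have "\<dots> = h ^ n * (\<Prod>t\<in>I. ((m - x) / h - c t)) / Lam"
      by (simp add: prod_dividef prod.distrib Lam_def cI)
    also have "\<dots> = K * (2 ^ (n - 1) * (\<Prod>t\<in>I. ((m - x) / h - c t)))"
      by (simp add: K_def)
    also have "\<dots> = K * poly (cheb n) ((m - x) / h)"
      using cheb_prod[OF fin cI n1 inj roots] by simp
    finally show ?thesis .
  qed
  have up: "uba_F lam_l lam_u Tk Tk1 es \<le> K^2"
    unfolding F
  proof (rule cSUP_least)
    show "{l..u} \<noteq> {}" using lu by simp
    fix x assume x: "x \<in> {l..u}"
    define y where "y = (m - x) / h"
    have "-1 \<le> y" "y \<le> 1" using x h0 by (auto simp: y_def m_def h_def field_simps)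
    then have "poly (cheb n) y = cos (real n * arccos y)" using cheb_cos[of n "arccos y"] by simp
    then have "(poly (cheb n) y)^2 \<le> 1" by (simp add: abs_square_le_1)
    then show "(poly (G es) x)^2 \<le> K^2" unfolding Ges y_def[symmetric] power_mult_distrib
      using K0 by (simp add: mult_left_le)
  qed
  have degG: "degree (G eta) \<le> n" for eta
  proof -
    have "degree (G eta) \<le> sum (degree \<circ> (\<lambda>t. [:1, - a eta t:])) I"
      unfolding G_def by (rule degree_prod_sum_le[OF fin])
    also have "\<dots> \<le> sum (\<lambda>t. 1) I" by (intro sum_mono) auto
    finally show ?thesis using cI by simp
  qed
  have G0: "poly (G eta) 0 = 1" for eta by (simp add: G_def poly_prod)
  define y where "y = (\<lambda>k::nat. m - h * cos (real k * pi / real n))"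
  have y_rng: "l \<le> y k \<and> y k \<le> u" for k
  proof -
    have "h * cos (real k * pi / real n) \<le> h" using h0 by (auto simp: mult_left_le)
    moreover have "- h \<le> h * cos (real k * pi / real n)"
      using h0 mult_left_mono[of "-1" "cos (real k * pi / real n)" h] by auto
    ultimately show ?thesis unfolding y_def m_def h_def by (simp add: field_simps)
  qed
  have y_lt: "y k < y k'" if "k < k'" "k' \<le> n" for k k'
  proof -
    have "cos (real k' * pi / real n) < cos (real k * pi / real n)"
      using that n1 by (intro cos_monotone_0_pi) (auto simp: field_simps)
    then show ?thesis using h0 by (simp add: y_def)
  qed
  have y_le: "y k \<le> y k'" if "k \<le> k'" "k' \<le> n" for k k'
    using y_lt[of k k'] that by (cases "k = k'") auto
  have Gy: "poly (G es) (y k) = K * (-1) ^ k" for k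
  proof -
    have "(m - y k) / h = cos (real k * pi / real n)" using h0 by (simp add: y_def)
    moreover have "real n * (real k * pi / real n) = real k * pi" using n1 by simp
    ultimately show ?thesis by (simp add: Ges cheb_cos)
  qed
  have low: "K^2 \<le> uba_F lam_l lam_u Tk Tk1 eta" for eta
  proof (rule ccontr)
    assume "\<not> K^2 \<le> uba_F lam_l lam_u Tk Tk1 eta"
    then have lt: "(SUP x\<in>{l..u}. (poly (G eta) x)^2) < K^2" unfolding F by simp
    have small: "\<bar>poly (G eta) x\<bar> < K" if "x \<in> {l..u}" for x
    proof -
      have "(poly (G eta) x)^2 \<le> (SUP x\<in>{l..u}. (poly (G eta) x)^2)"
        using that bdd_poly by (intro cSUP_upper) auto
      then have "\<bar>poly (G eta) x\<bar>^2 < K^2" using lt by simp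
      then show ?thesis using K0 by (metis power_less_imp_less_base less_imp_le)
    qed
    define r where "r = G es - G eta"
    have sgn: "(-1)^k * poly r (y k) > 0" for k
    proof -
      have "\<bar>(-1)^k * poly (G eta) (y k)\<bar> < K" using small y_rng[of k] by (simp add: abs_mult)
      then have "(-1)^k * poly (G eta) (y k) < K" by linarith
      moreover have "(-1::real)^k * (-1)^k = 1" by (simp flip: power_add)
      ultimately show ?thesis by (simp add: r_def Gy algebra_simps)
    qed
    have alt: "poly r (y k) * poly r (y (Suc k)) < 0" for k
    proof -
      have "0 < ((-1)^k * poly r (y k)) * ((-1)^Suc k * poly r (y (Suc k)))"
        using sgn[of k] sgn[of "Suc k"] by (rule mult_pos_pos)
      moreover have "(-1::real)^k * (-1)^k = 1" by (simp flip: power_add)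
      ultimately show ?thesis by (simp add: algebra_simps)
    qed
    have "\<forall>k. \<exists>z. k < n \<longrightarrow> y k < z \<and> z < y (Suc k) \<and> poly r z = 0"
    proof (intro allI)
      fix k
      show "\<exists>z. k < n \<longrightarrow> y k < z \<and> z < y (Suc k) \<and> poly r z = 0"
      proof (cases "k < n")
        case True
        then show ?thesis using ivt_sign[of "y k" "y (Suc k)" "poly r"] y_le[of k "Suc k"] alt[of k]
          using continuous_on_poly[OF continuous_on_id, of "{y k..y (Suc k)}" r] by auto
      qed auto
    qed
    then obtain z where z: "\<And>k. k < n \<Longrightarrow> y k < z k \<and> z k < y (Suc k) \<and> poly r (z k) = 0"
      by metis
    have zmono: "z k < z k'" if "k < k'" "k' < n" for k k'
      using z[of k] z[of k'] y_le[of "Suc k" k'] that by force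
    have injz: "inj_on z {..<n}"
      by (rule inj_onI) (metis lessThan_iff linorder_neqE_nat zmono less_irrefl)
    have z0: "0 \<notin> z ` {..<n}" using z y_rng l0 by (smt (verit) imageE lessThan_iff)
    define S where "S = insert 0 (z ` {..<n})"
    have cS: "card S = n + 1" using injz z0 by (simp add: S_def card_image)
    have Sr: "S \<subseteq> {x. poly r x = 0}" using z by (auto simp: S_def r_def G0)
    have "r = 0"
    proof (rule ccontr)
      assume r0: "r \<noteq> 0"
      have "card S \<le> card {x. poly r x = 0}"
        using Sr poly_roots_finite[OF r0] by (intro card_mono)
      also have "\<dots> \<le> degree r" by (rule card_poly_roots_bound[OF r0])
      also have "\<dots> \<le> n" unfolding r_def using degG[of es] degG[of eta] degree_diff_le_max
        by (metis le_trans max.bounded_iff)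
      finally show False using cS by simp
    qed
    then show False using sgn[of 0] by simp
  qed
  show ?thesis using part1 up low unfolding es_def I_def by (meson order_trans)
qed

end
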